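(* Let $K$ be a closed convex cone in a finite-dimensional real Euclidean space $\mathbb{E}$. If $K$ is facially dual complete, then for every face $F$ of $K$ with $F\neq K$ and every $x\in F$, \[ \mathcal{T}(x;K)\cap \operatorname{span} F = \mathcal{T}(x;F). \] That is, every facially dual complete closed convex cone is tangentially exposed.
   Context: $\mathbb{E}$ is identified with its dual via the inner product. For a closed convex set $C$ and $x\in C$, the tangent cone is $\mathcal{T}(x;C)=\operatorname{cl}\{d\in\mathbb{E}: x+\epsilon d\in C \text{ for some } \epsilon>0\}$. A face of a closed convex set $C$ is a closed convex subset $F\subseteq C$ such that whenever $x\in F$, $y,z\in C$ and $x$ lies in the open segment $(y,z)$, then $y,z\in F$. For a closed convex cone $K$, $K^*=\{s:\langle s,x\rangle\ge 0\ \forall x\in K\}$, and for $F\subseteq \mathbb{E}$, $F^\perp=\{s:\langle s,x\rangle=0\ \forall x\in F\}$. $K$ is facially dual complete (FDC, "nice") if $K^*+F^\perp$ is closed for every nonempty face $F\neq K$ of $K$. A closed convex cone $K$ is tangentially exposed if $\mathcal{T}(x;K)\cap\operatorname{span}F=\mathcal{T}(x;F)$ for every face $F\neq K$ of $K$ and every $x\in F$. *)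

theory Defs
  imports "HOL-Analysis.Analysis"
begin

definition tangent_cone :: "'a::euclidean_space \<Rightarrow> 'a set \<Rightarrow> 'a set" where
  "tangent_cone x C = closure {d. \<exists>\<epsilon>>0. x + \<epsilon> *\<^sub>R d \<in> C}"

definition is_face :: "'a::euclidean_space set \<Rightarrow> 'a set \<Rightarrow> bool" where
  "is_face F C \<longleftrightarrow> closed F \<and> F face_of C"

definition dual_cone :: "'a::euclidean_space set \<Rightarrow> 'a set" where
  "dual_cone K = {s. \<forall>x\<in>K. inner s x \<ge> 0}"

definition perp :: "'a::euclidean_space set \<Rightarrow> 'a set" where
  "perp F = {s. \<forall>x\<in>F. inner s x = 0}"

definition closed_convex_cone :: "'a::euclidean_space set \<Rightarrow> bool" where
  "closed_convex_cone K \<longleftrightarrow> closed K \<and> convex K \<and> cone K \<and> K \<noteq> {}"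

definition facially_dual_complete :: "'a::euclidean_space set \<Rightarrow> bool" where
  "facially_dual_complete K \<longleftrightarrow>
     (\<forall>F. is_face F K \<and> F \<noteq> {} \<and> F \<noteq> K \<longrightarrow> closed (dual_cone K + perp F))"

definition tangentially_exposed :: "'a::euclidean_space set \<Rightarrow> bool" where
  "tangentially_exposed K \<longleftrightarrow>
     (\<forall>F x. is_face F K \<and> F \<noteq> K \<and> x \<in> F \<longrightarrow>
        tangent_cone x K \<inter> span F = tangent_cone x F)"

end

theory Submission
  imports Defs
begin

lemma cone_sep:
  fixes C :: "'a::euclidean_space set"
  assumes "closed C" "convex C" "cone C" "C \<noteq> {}" "y \<notin> C"
  shows "\<exists>k. (\<forall>z\<in>C. inner k z \<ge> 0) \<and> inner k y < 0"
proof -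
  obtain a b where ab: "inner a y < b" "\<forall>x\<in>C. inner a x > b"
    using separating_hyperplane_closed_point[OF assms(2,1,5)] by blast
  have "0 \<in> C" using assms(3,4) cone_contains_0 by blast
  hence b0: "b < 0" using ab by force
  have "inner a z \<ge> 0" if z: "z \<in> C" for z
  proof (rule ccontr)
    assume "\<not> 0 \<le> inner a z"
    hence neg: "inner a z < 0" by simp
    define c where "c = b / inner a z"
    have c0: "c \<ge> 0" unfolding c_def using neg b0 by (simp add: divide_nonpos_neg)
    have "c *\<^sub>R z \<in> C" using assms(3) z c0 unfolding cone_def by blast
    hence "inner a (c *\<^sub>R z) > b" using ab by blast
    moreover have "inner a (c *\<^sub>R z) = b" unfolding c_def using neg by simp
    ultimately show False by simp
  qed
  thus ?thesis using ab b0 by (intro exI[of _ a]) auto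
qed

lemma perp_span:
  assumes "p \<in> perp F" "d \<in> span F"
  shows "inner p d = 0"
proof -
  have "subspace {y. inner p y = 0}"
    by (auto simp: subspace_def inner_add_right)
  moreover have "F \<subseteq> {y. inner p y = 0}" using assms(1) by (auto simp: perp_def)
  ultimately show ?thesis using assms(2) span_minimal by blast
qed

theorem theorem3p1:
  fixes K :: "'a::euclidean_space set"
  assumes "closed_convex_cone K"
    and "facially_dual_complete K"
  shows "\<forall>F x. is_face F K \<and> F \<noteq> K \<and> x \<in> F \<longrightarrow>
           tangent_cone x K \<inter> span F = tangent_cone x F"
proof (intro allI impI)
  fix F and x :: 'a
  assume H: "is_face F K \<and> F \<noteq> K \<and> x \<in> F"
  have Kc: "closed K" "convex K" "cone K" "K \<noteq> {}"
    using assms(1) by (auto simp: closed_convex_cone_def)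
  have fF: "F face_of K" and cF: "closed F" and FK: "F \<noteq> K" and xF: "x \<in> F"
    using H by (auto simp: is_face_def)
  have FsubK: "F \<subseteq> K" using fF face_of_imp_subset by blast
  have convF: "convex F" using fF face_of_imp_convex by blast
  have K0: "0 \<in> K" using Kc cone_contains_0 by blast
  have F0: "0 \<in> F"
  proof (cases "x = 0")
    case True thus ?thesis using xF by simp
  next
    case False
    have "x \<in> open_segment 0 (2 *\<^sub>R x)"
    proof -
      have "x \<noteq> 2 *\<^sub>R x" using False by (metis scaleR_2 add_cancel_right_right)
      thus ?thesis using False unfolding open_segment_def closed_segment_def
        by (auto intro!: exI[of _ "1/2"])
    qed
    moreover have "2 *\<^sub>R x \<in> K" using Kc(3) FsubK xF unfolding cone_def by auto
    ultimately show ?thesis using face_ofD[OF fF _ K0 _ xF] by blast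
  qed
  have F2x: "2 *\<^sub>R x \<in> F"
  proof (cases "x = 0")
    case True thus ?thesis using xF by simp
  next
    case False
    have "x \<in> open_segment 0 (2 *\<^sub>R x)"
    proof -
      have "x \<noteq> 2 *\<^sub>R x" using False by (metis scaleR_2 add_cancel_right_right)
      thus ?thesis using False unfolding open_segment_def closed_segment_def
        by (auto intro!: exI[of _ "1/2"])
    qed
    moreover have "2 *\<^sub>R x \<in> K" using Kc(3) FsubK xF unfolding cone_def by auto
    ultimately show ?thesis using face_ofD[OF fF _ K0 _ xF] by blast
  qed
  have KspanF: "K \<inter> span F \<subseteq> F"
  proof -
    have "F = affine hull F \<inter> K" using face_of_imp_eq_affine_Int[OF Kc(2) fF] .
    moreover have "affine hull F = span F"
      using affine_hull_span_0[of F] F0 hull_inc[of 0 F] by blast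
    ultimately show ?thesis by blast
  qed
  have Cclosed: "closed (dual_cone K + perp F)"
    using assms(2) H xF unfolding facially_dual_complete_def by blast
  have Cconv: "convex (dual_cone K + perp F)"
  proof -
    have "convex (dual_cone K)"
      unfolding dual_cone_def convex_def by (auto simp: inner_add_left intro!: add_nonneg_nonneg)
    moreover have "convex (perp F)"
      unfolding perp_def convex_def by (auto simp: inner_add_left)
    ultimately show ?thesis using convex_set_plus by blast
  qed
  have Ccone: "cone (dual_cone K + perp F)"
    unfolding cone_def
  proof (intro ballI allI impI)
    fix z and c :: real assume z: "z \<in> dual_cone K + perp F" and c: "0 \<le> c"
    then obtain a p where a: "a \<in> dual_cone K" and p: "p \<in> perp F" and zap: "z = a + p"
      by (auto simp: set_plus_def)
    have "c *\<^sub>R a \<in> dual_cone K" using a c by (auto simp: dual_cone_def)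
    moreover have "c *\<^sub>R p \<in> perp F" using p by (auto simp: perp_def)
    ultimately have "c *\<^sub>R a + c *\<^sub>R p \<in> dual_cone K + perp F" by (rule set_plus_intro)
    thus "c *\<^sub>R z \<in> dual_cone K + perp F" using zap by (simp add: scaleR_add_right)
  qed
  have dK0: "0 \<in> dual_cone K" and pF0: "0 \<in> perp F" by (auto simp: dual_cone_def perp_def)
  have Cne: "dual_cone K + perp F \<noteq> {}" using dK0 pF0 by (auto simp: set_plus_def)
  have Fdual: "s \<in> dual_cone K + perp F" if s: "s \<in> dual_cone F" for s
  proof (rule ccontr)
    assume ns: "s \<notin> dual_cone K + perp F"
    obtain k where k1: "\<forall>z\<in>dual_cone K + perp F. inner k z \<ge> 0" and k2: "inner k s < 0"
      using cone_sep[OF Cclosed Cconv Ccone Cne ns] by blast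
    have kK: "k \<in> K"
    proof (rule ccontr)
      assume "k \<notin> K"
      then obtain a where a1: "\<forall>z\<in>K. inner a z \<ge> 0" and a2: "inner a k < 0"
        using cone_sep[OF Kc] by blast
      have "a \<in> dual_cone K" using a1 by (auto simp: dual_cone_def)
      hence "a + 0 \<in> dual_cone K + perp F" using pF0 by (intro set_plus_intro)
      hence "inner k a \<ge> 0" using k1 by simp
      thus False using a2 by (simp add: inner_commute)
    qed
    have kS: "k \<in> span F"
    proof (rule ccontr)
      assume "k \<notin> span F"
      then obtain a where a1: "\<forall>z\<in>span F. inner a z \<ge> 0" and a2: "inner a k < 0"
        using cone_sep[OF closed_span subspace_imp_convex[OF subspace_span]
            subspace_imp_cone[OF subspace_span] _ \<open>k \<notin> span F\<close>] span_zero[of F]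
        by blast
      have "a \<in> perp F" unfolding perp_def
      proof clarify
        fix z assume z: "z \<in> F"
        have "inner a z \<ge> 0" using a1 z span_base by blast
        moreover have "inner a (- z) \<ge> 0" using a1 z span_base span_neg by blast
        ultimately show "inner a z = 0" by simp
      qed
      hence "0 + a \<in> dual_cone K + perp F" using dK0 by (intro set_plus_intro)
      hence "inner k a \<ge> 0" using k1 by simp
      thus False using a2 by (simp add: inner_commute)
    qed
    have "k \<in> F" using kK kS KspanF by blast
    hence "inner s k \<ge> 0" using s by (auto simp: dual_cone_def)
    thus False using k2 by (simp add: inner_commute)
  qed
  show "tangent_cone x K \<inter> span F = tangent_cone x F"
  proof
    show "tangent_cone x F \<subseteq> tangent_cone x K \<inter> span F"
    proof (rule Int_greatest)
      have sub1: "{d. \<exists>\<epsilon>>0. x + \<epsilon> *\<^sub>R d \<in> F} \<subseteq> {d. \<exists>\<epsilon>>0. x + \<epsilon> *\<^sub>R d \<in> K}"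
        using FsubK by blast
      thus "tangent_cone x F \<subseteq> tangent_cone x K"
        unfolding tangent_cone_def by (rule closure_mono)
    next
      have "{d. \<exists>\<epsilon>>0. x + \<epsilon> *\<^sub>R d \<in> F} \<subseteq> span F"
      proof clarify
        fix d and e :: real assume e: "e > 0" "x + e *\<^sub>R d \<in> F"
        have "(1/e) *\<^sub>R ((x + e *\<^sub>R d) - x) \<in> span F"
          using e xF by (intro span_mul span_diff span_base)
        thus "d \<in> span F" using e by simp
      qed
      thus "tangent_cone x F \<subseteq> span F"
        unfolding tangent_cone_def by (rule closure_minimal[OF _ closed_span])
    qed
  next
    show "tangent_cone x K \<inter> span F \<subseteq> tangent_cone x F"
    proof
      fix d assume d: "d \<in> tangent_cone x K \<inter> span F"
      define D where "D = {d. \<exists>\<epsilon>>0. x + \<epsilon> *\<^sub>R d \<in> F}"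
      have shrink: "x + t *\<^sub>R v \<in> F" if "x + e *\<^sub>R v \<in> F" "0 < t" "t \<le> e" for v t e
      proof -
        have "(1 - t/e) *\<^sub>R x + (t/e) *\<^sub>R (x + e *\<^sub>R v) \<in> F"
          using convexD_alt[OF convF xF that(1), of "t/e"] that by auto
        moreover have "(1 - t/e) *\<^sub>R x + (t/e) *\<^sub>R (x + e *\<^sub>R v) = x + t *\<^sub>R v"
          using that by (simp add: algebra_simps)
        ultimately show ?thesis by simp
      qed
      have Dconv: "convex D"
        unfolding convex_alt
      proof clarify
        fix d1 d2 and u :: real
        assume d1: "d1 \<in> D" and d2: "d2 \<in> D" and u: "0 \<le> u" "u \<le> 1"
        obtain e1 where e1: "e1 > 0" "x + e1 *\<^sub>R d1 \<in> F" using d1 D_def by blast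
        obtain e2 where e2: "e2 > 0" "x + e2 *\<^sub>R d2 \<in> F" using d2 D_def by blast
        define e where "e = min e1 e2"
        have e0: "e > 0" using e1 e2 by (simp add: e_def)
        have f1: "x + e *\<^sub>R d1 \<in> F" using shrink[OF e1(2) e0] e_def by simp
        have f2: "x + e *\<^sub>R d2 \<in> F" using shrink[OF e2(2) e0] e_def by simp
        have "(1 - u) *\<^sub>R (x + e *\<^sub>R d1) + u *\<^sub>R (x + e *\<^sub>R d2) \<in> F"
          using convexD_alt[OF convF f1 f2 u] by simp
        moreover have "(1 - u) *\<^sub>R (x + e *\<^sub>R d1) + u *\<^sub>R (x + e *\<^sub>R d2)
             = x + e *\<^sub>R ((1 - u) *\<^sub>R d1 + u *\<^sub>R d2)"
          by (simp add: algebra_simps)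
        ultimately show "(1 - u) *\<^sub>R d1 + u *\<^sub>R d2 \<in> D"
          unfolding D_def using e0 by auto
      qed
      have Dcone: "cone D"
        unfolding cone_def
      proof clarify
        fix v and c :: real assume v: "v \<in> D" and c: "0 \<le> c"
        obtain e where e: "e > 0" "x + e *\<^sub>R v \<in> F" using v D_def by blast
        show "c *\<^sub>R v \<in> D"
        proof (cases "c = 0")
          case True thus ?thesis unfolding D_def using xF by (auto intro!: exI[of _ 1])
        next
          case False
          hence "x + (e / c) *\<^sub>R (c *\<^sub>R v) \<in> F" using e by simp
          thus ?thesis unfolding D_def using False c e by (auto intro!: exI[of _ "e/c"])
        qed
      qed
      have D0: "0 \<in> D" unfolding D_def using xF by (auto intro!: exI[of _ 1])
      show "d \<in> tangent_cone x F"
      proof (rule ccontr)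
        assume nd: "d \<notin> tangent_cone x F"
        obtain k where k1: "\<forall>z\<in>closure D. inner k z \<ge> 0" and k2: "inner k d < 0"
        proof -
          have "d \<notin> closure D" using nd unfolding tangent_cone_def D_def by simp
          moreover have "closure D \<noteq> {}" using D0 closure_subset by blast
          ultimately show ?thesis
            using cone_sep[of "closure D" d] convex_closure[OF Dconv] cone_closure[OF Dcone] closed_closure[of D] that
            by blast
        qed
        have kF: "inner k (y - x) \<ge> 0" if y: "y \<in> F" for y
        proof -
          have "y - x \<in> D" unfolding D_def using y by (auto intro!: exI[of _ 1])
          thus ?thesis using k1 closure_subset by blast
        qed
        have kx: "inner k x = 0"
          using kF[OF F0] kF[OF F2x] by (simp add: inner_diff_right)
        have "k \<in> dual_cone F"
          using kF kx by (auto simp: dual_cone_def inner_diff_right)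
        then obtain a p where a: "a \<in> dual_cone K" and p: "p \<in> perp F" and kap: "k = a + p"
          using Fdual[OF \<open>k \<in> dual_cone F\<close>] by (auto simp: set_plus_def)
        have px: "inner p x = 0" using p xF by (auto simp: perp_def)
        have ax: "inner a x = 0" using kx px kap by (simp add: inner_add_left)
        have pd: "inner p d = 0" using perp_span p d by blast
        have "inner a d \<ge> 0"
        proof -
          have "closed {d. inner a d \<ge> 0}"
            using closed_halfspace_ge[of 0 a] by (simp add: inner_commute)
          moreover have "{d. \<exists>\<epsilon>>0. x + \<epsilon> *\<^sub>R d \<in> K} \<subseteq> {d. inner a d \<ge> 0}"
          proof clarify
            fix d' and e :: real assume e: "e > 0" "x + e *\<^sub>R d' \<in> K"
            hence "inner a (x + e *\<^sub>R d') \<ge> 0" using a by (auto simp: dual_cone_def)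
            hence "e * inner a d' \<ge> 0" using ax by (simp add: inner_add_right)
            thus "inner a d' \<ge> 0" using e by (simp add: zero_le_mult_iff)
          qed
          ultimately have "tangent_cone x K \<subseteq> {d. inner a d \<ge> 0}"
            unfolding tangent_cone_def by (rule closure_minimal[rotated])
          thus ?thesis using d by blast
        qed
        hence "inner k d \<ge> 0" using pd kap by (simp add: inner_add_left)
        thus False using k2 by simp
      qed
    qed
  qed
qed

end
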